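(* Let $q$ be a power of an odd prime, $k\ge2$, $0<r_1<r_2<\cdots<r_k<n$ integers, $a_1,\dots,a_k\in\mathbb{F}_{q^n}^*$ with the multiplicative order of $a_i$ dividing $q^{r_1}-1$ for all $i=2,\dots,k$, and $S(x)=\sum_{i=1}^k a_ix^{q^{r_i}}$. Then the following are equivalent: (1) $S(x)$ is a scattered polynomial of index $r_1$ over $\mathbb{F}_{q^n}$; (2) $S_{r_1}(x)=S(x)-a_1x^{q^{r_1}}=\sum_{i=2}^k a_ix^{q^{r_i}}$ is a scattered polynomial of index $r_1$ over $\mathbb{F}_{q^n}$; (3) $S^{r_1}_{r_1}(x)=\sum_{i=2}^k a_ix^{q^{r_i-r_1}}$ is a scattered polynomial of index $0$ over $\mathbb{F}_{q^n}$.
   Context: An $\mathbb{F}_q$-linearized polynomial $S\in\mathbb{F}_{q^n}[x]$ is a scattered polynomial of index $t$ over $\mathbb{F}_{q^n}$ if for all $y,z\in\mathbb{F}_{q^n}^*$, $\frac{S(y)}{y^{q^t}}=\frac{S(z)}{z^{q^t}}$ implies $y/z\in\mathbb{F}_q$. *)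

theory Defs
  imports Main "HOL-Computational_Algebra.Primes"
begin

definition subfield_Fq :: "nat \<Rightarrow> 'a::field set" where
  "subfield_Fq q = {x. x ^ q = x}"

definition mult_order :: "'a::field \<Rightarrow> nat" where
  "mult_order a = (LEAST d. 0 < d \<and> a ^ d = 1)"

text \<open>S is scattered of index t over F_(q^n) (ambient field is the type 'a):
  for all nonzero y, z, S(y)/y^(q^t) = S(z)/z^(q^t) implies y/z in F_q.\<close>
definition scattered :: "nat \<Rightarrow> nat \<Rightarrow> ('a::field \<Rightarrow> 'a) \<Rightarrow> bool" where
  "scattered q t S \<longleftrightarrow>
     (\<forall>y z. y \<noteq> 0 \<longrightarrow> z \<noteq> 0 \<longrightarrow> S y / y ^ (q ^ t) = S z / z ^ (q ^ t)
        \<longrightarrow> y / z \<in> subfield_Fq q)"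

end

theory Submission
  imports Defs "HOL-Number_Theory.Residues"
begin

lemma char_eq_p:
  fixes p e :: nat
  assumes "prime p" "e \<ge> 1" "card (UNIV :: 'a::{finite,field} set) = p ^ e"
  shows "CHAR('a) = p"
proof -
  have pos: "CHAR('a) > 0" by (simp add: finite_imp_CHAR_pos)
  hence pr: "prime CHAR('a)" using prime_CHAR_semidom by blast
  have "CHAR('a) dvd p ^ e" using CHAR_dvd_CARD[where 'a='a] assms(3) by simp
  hence "CHAR('a) dvd p" using pr prime_dvd_power by blast
  thus ?thesis using pr assms(1) primes_dvd_imp_eq by blast
qed

lemma frob_inj:
  fixes u v :: "'a::field"
  assumes "prime CHAR('a)" "N = CHAR('a) ^ e" "u ^ N = v ^ N"
  shows "u = v"
proof -
  have "u ^ N = (u - v) ^ N + v ^ N"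
    using freshmans_dream'[OF assms(1) assms(2), of "u - v" v] by simp
  hence "(u - v) ^ N = 0" using assms(3) by simp
  thus ?thesis by simp
qed

lemma pow_order_one:
  fixes a :: "'a::{finite,field}"
  assumes "a \<noteq> 0"
  shows "a ^ mult_order a = 1"
proof -
  have "\<not> inj (\<lambda>n::nat. a ^ n)"
  proof
    assume "inj (\<lambda>n::nat. a ^ n)"
    hence "infinite (range (\<lambda>n::nat. a ^ n))"
      using finite_imageD infinite_UNIV_nat by blast
    thus False by simp
  qed
  then obtain i j :: nat where ij: "a ^ i = a ^ j" "i < j"
    unfolding inj_def by (metis linorder_neqE_nat)
  have "a ^ j = a ^ i * a ^ (j - i)" using ij(2)
    by (metis le_add_diff_inverse less_imp_le_nat power_add)
  hence "a ^ i * a ^ (j - i) = a ^ i * 1" using ij(1) by simp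
  hence "a ^ (j - i) = 1" using assms by (metis mult_left_cancel power_not_zero)
  hence "\<exists>d. 0 < d \<and> a ^ d = 1" using ij(2) by (intro exI[of _ "j - i"]) auto
  then show ?thesis unfolding mult_order_def by (rule LeastI2_ex) auto
qed

lemma pow_fixed:
  fixes a :: "'a::{finite,field}"
  assumes "a \<noteq> 0" "mult_order a dvd N - 1" "N \<ge> 1"
  shows "a ^ N = a"
proof -
  obtain c where c: "N - 1 = mult_order a * c" using assms(2) by blast
  have "a ^ (N - 1) = 1" unfolding c power_mult pow_order_one[OF assms(1)] by simp
  moreover have "N = Suc (N - 1)" using assms(3) by simp
  hence "a ^ N = a * a ^ (N - 1)" by (metis power_Suc)
  ultimately show ?thesis by simp
qed

theorem mainTheorem5:
  fixes p m n k :: nat and r :: "nat \<Rightarrow> nat" and a :: "nat \<Rightarrow> 'a::{finite,field}"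
  assumes "prime p" and "odd p" and "m \<ge> 1"
    and card: "card (UNIV :: 'a set) = (p ^ m) ^ n"
    and "k \<ge> 2"
    and "0 < r 1" and "strict_mono_on {1..k} r" and "r k < n"
    and "\<forall>i\<in>{1..k}. a i \<noteq> 0"
    and "\<forall>i\<in>{2..k}. mult_order (a i) dvd ((p ^ m) ^ r 1 - 1)"
  shows "(scattered (p ^ m) (r 1) (\<lambda>x. \<Sum>i=1..k. a i * x ^ ((p ^ m) ^ r i))
            \<longleftrightarrow> scattered (p ^ m) (r 1) (\<lambda>x. \<Sum>i=2..k. a i * x ^ ((p ^ m) ^ r i)))
       \<and> (scattered (p ^ m) (r 1) (\<lambda>x. \<Sum>i=2..k. a i * x ^ ((p ^ m) ^ r i))
            \<longleftrightarrow> scattered (p ^ m) 0 (\<lambda>x. \<Sum>i=2..k. a i * x ^ ((p ^ m) ^ (r i - r 1))))"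
proof -
  define Q where "Q = p ^ m"
  define N where "N = Q ^ r 1"
  have "r 1 < r k" using assms(7) \<open>k \<ge> 2\<close>
    by (intro strict_mono_onD[OF assms(7)]) auto
  hence n1: "n \<ge> 1" using assms(6,8) by linarith
  have ch: "CHAR('a) = p"
    using char_eq_p[of p "m * n", where 'a='a] assms(1,3) n1 card
    by (simp add: power_mult)
  have prc: "prime CHAR('a)" using ch assms(1) by simp
  have Nch: "N = CHAR('a) ^ (m * r 1)" unfolding N_def Q_def ch by (simp add: power_mult)
  have Npos: "N \<ge> 1" unfolding N_def Q_def using assms(1)
    by (metis One_nat_def Suc_leI prime_gt_0_nat zero_less_power)
  define S1 where "S1 = (\<lambda>x::'a. \<Sum>i=1..k. a i * x ^ (Q ^ r i))"
  define S2 where "S2 = (\<lambda>x::'a. \<Sum>i=2..k. a i * x ^ (Q ^ r i))"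
  define S3 where "S3 = (\<lambda>x::'a. \<Sum>i=2..k. a i * x ^ (Q ^ (r i - r 1)))"
  have split: "S1 x = a 1 * x ^ N + S2 x" for x
  proof -
    have "{1..k} = insert 1 {2..k}" using \<open>k \<ge> 2\<close> by auto
    thus ?thesis unfolding S1_def S2_def N_def by simp
  qed
  have rel: "S2 x = S3 x ^ N" for x
  proof -
    have "S3 x ^ N = (\<Sum>i=2..k. (a i * x ^ (Q ^ (r i - r 1))) ^ N)"
      unfolding S3_def by (rule freshmans_dream_sum'[OF prc Nch])
    also have "\<dots> = S2 x" unfolding S2_def
    proof (rule sum.cong[OF refl])
      fix i assume i: "i \<in> {2..k}"
      have "r 1 < r i" using assms(7) i unfolding strict_mono_on_def by auto
      hence e: "Q ^ (r i - r 1) * N = Q ^ r i" unfolding N_def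
        by (simp flip: power_add)
      have "a i ^ N = a i" using pow_fixed[of "a i" N] assms(9,10) i Npos
        unfolding N_def Q_def by auto
      show "(a i * x ^ (Q ^ (r i - r 1))) ^ N = a i * x ^ (Q ^ r i)"
        unfolding power_mult_distrib \<open>a i ^ N = a i\<close> power_mult[symmetric] e by (rule refl)
    qed
    finally show ?thesis by simp
  qed
  have P1: "scattered Q (r 1) S1 \<longleftrightarrow> scattered Q (r 1) S2"
    unfolding scattered_def N_def[symmetric]
  proof (intro iff_allI imp_cong refl)
    fix y z :: 'a assume "y \<noteq> 0" "z \<noteq> 0"
    hence "S1 y / y ^ N = a 1 + S2 y / y ^ N" "S1 z / z ^ N = a 1 + S2 z / z ^ N"
      by (simp_all add: split add_divide_distrib)
    thus "(S1 y / y ^ N = S1 z / z ^ N) = (S2 y / y ^ N = S2 z / z ^ N)" by simp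
  qed
  have P2: "scattered Q (r 1) S2 \<longleftrightarrow> scattered Q 0 S3"
    unfolding scattered_def N_def[symmetric]
  proof (intro iff_allI imp_cong refl)
    fix y z :: 'a
    have "S2 y / y ^ N = (S3 y / y) ^ N" "S2 z / z ^ N = (S3 z / z) ^ N"
      by (simp_all add: rel power_divide)
    thus "(S2 y / y ^ N = S2 z / z ^ N) = (S3 y / y ^ Q ^ 0 = S3 z / z ^ Q ^ 0)"
      using frob_inj[OF prc Nch] by auto
  qed
  show ?thesis using P1 P2 unfolding S1_def S2_def S3_def Q_def by simp
qed

end
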